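(* Let $G$ be a compact Lie group (not necessarily connected) and $\rho:G\to\mathbf O(V)$ an orthogonal representation on a finite-dimensional real inner product space $V$. Let $H$ be a fixed principal isotropy subgroup of the $G$-action on $V$, let $V^H$ be the subspace of vectors fixed by $H$, and let $N$ be the normalizer of $H$ in $G$ (so $N$ acts on $V^H$). For $p\in V$ put $\nu_p=(T_p(Gp))^\perp\subset V$, and for $p\in V^H$ put $\sigma_p=(T_p(Np))^\perp\cap V^H$. Then for every $p\in V^H$ we have $\sigma_p=\nu_p\cap V^H$.
   Context: A principal isotropy subgroup is the isotropy group $G_x$ of a point $x$ on a principal orbit of the action. Orthogonal complements are taken in $V$. *)

theory Defs
  imports "HOL-Analysis.Analysis" "HOL-Algebra.Group_Action"
begin

text \<open>For an embedded submanifold (e.g. an orbit of a compact group) this is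
  the usual tangent space.\<close>
definition tangent_space :: "'v::real_normed_vector set \<Rightarrow> 'v \<Rightarrow> 'v set" where
  "tangent_space S p = {v. \<exists>c :: real \<Rightarrow> 'v. c 0 = p \<and> (\<forall>\<^sub>F t in at 0. c t \<in> S)
                              \<and> (c has_vector_derivative v) (at 0)}"

definition fixed_subspace :: "('g \<Rightarrow> 'v \<Rightarrow> 'v) \<Rightarrow> 'g set \<Rightarrow> 'v set" where
  "fixed_subspace \<rho> H = {v. \<forall>h\<in>H. \<rho> h v = v}"

definition principal_point :: "('g, 'b) monoid_scheme \<Rightarrow> ('g \<Rightarrow> 'v \<Rightarrow> 'v) \<Rightarrow> 'v \<Rightarrow> bool" where
  "principal_point G \<rho> x \<longleftrightarrow>
     (\<forall>y. \<exists>g\<in>carrier G. (\<lambda>h. g \<otimes>\<^bsub>G\<^esub> h \<otimes>\<^bsub>G\<^esub> inv\<^bsub>G\<^esub> g) ` stabilizer G \<rho> x \<subseteq> stabilizer G \<rho> y)"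

definition principal_isotropy_subgroup :: "('g, 'b) monoid_scheme \<Rightarrow> ('g \<Rightarrow> 'v \<Rightarrow> 'v) \<Rightarrow> 'g set \<Rightarrow> bool" where
  "principal_isotropy_subgroup G \<rho> H \<longleftrightarrow> (\<exists>x. principal_point G \<rho> x \<and> H = stabilizer G \<rho> x)"

end

theory Submission
  imports Defs
begin


typedef (overloaded) 'a endo = "UNIV :: ('a::euclidean_space \<Rightarrow>\<^sub>L 'a) set"
  morphisms Rep_endo Abs_endo by simp

setup_lifting type_definition_endo

instantiation endo :: (euclidean_space) real_normed_vector
begin
lift_definition norm_endo :: "'a endo \<Rightarrow> real" is norm .
lift_definition minus_endo :: "'a endo \<Rightarrow> 'a endo \<Rightarrow> 'a endo" is "(-)" .
lift_definition plus_endo :: "'a endo \<Rightarrow> 'a endo \<Rightarrow> 'a endo" is "(+)" .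
lift_definition uminus_endo :: "'a endo \<Rightarrow> 'a endo" is "uminus" .
lift_definition zero_endo :: "'a endo" is "0" .
lift_definition scaleR_endo :: "real \<Rightarrow> 'a endo \<Rightarrow> 'a endo" is "scaleR" .
definition dist_endo :: "'a endo \<Rightarrow> 'a endo \<Rightarrow> real"
  where "dist_endo a b = norm (a - b)"
definition sgn_endo :: "'a endo \<Rightarrow> 'a endo"
  where "sgn_endo x = scaleR (inverse (norm x)) x"
definition uniformity_endo :
  "(uniformity :: ('a endo \<times> 'a endo) filter) = (INF e\<in>{0 <..}. principal {(x, y). dist x y < e})"
definition open_endo :: "'a endo set \<Rightarrow> bool"
  where "open_endo S = (\<forall>x\<in>S. \<forall>\<^sub>F (x', y) in uniformity. x' = x \<longrightarrow> y \<in> S)"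
instance
  apply standard
  unfolding dist_endo_def open_endo_def sgn_endo_def uniformity_endo
  apply (rule refl | (transfer, force simp: norm_triangle_ineq algebra_simps))+
  done
end

instantiation endo :: (euclidean_space) real_normed_algebra_1
begin
lift_definition one_endo :: "'a endo" is "id_blinfun" .
lift_definition times_endo :: "'a endo \<Rightarrow> 'a endo \<Rightarrow> 'a endo" is "(o\<^sub>L)" .
instance
  apply standard
  apply (transfer; simp add: blinfun_eqI blinfun.bilinear_simps)+
    apply (metis blinfun_apply_id_blinfun blinfun.zero_left nonzero_Basis SOME_Basis)
   apply transfer apply (rule norm_blinfun_compose)
  apply transfer apply simp
  done
end


lemma Rep_norm: "norm (Rep_endo x) = norm x" by (simp add: norm_endo.rep_eq)
lemma Rep_dist: "dist (Rep_endo x) (Rep_endo y) = dist x y"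
  by (simp add: dist_endo_def dist_norm norm_endo.rep_eq minus_endo.rep_eq)

lemma tendsto_Rep_iff: "(f \<longlongrightarrow> l) F \<longleftrightarrow> ((\<lambda>n. Rep_endo (f n)) \<longlongrightarrow> Rep_endo l) F"
  by (simp add: tendsto_iff Rep_dist)

instance endo :: (euclidean_space) banach
proof
  fix X :: "nat \<Rightarrow> 'a endo" assume "Cauchy X"
  hence "Cauchy (\<lambda>n. Rep_endo (X n))" by (simp add: Cauchy_def Rep_dist)
  then obtain L where "(\<lambda>n. Rep_endo (X n)) \<longlonglongrightarrow> L" using Cauchy_convergent_iff convergent_def by blast
  hence "X \<longlonglongrightarrow> Abs_endo L" by (simp add: tendsto_Rep_iff Abs_endo_inverse)
  thus "convergent X" by (auto simp: convergent_def)
qed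

instance endo :: (euclidean_space) heine_borel
proof
  fix f :: "nat \<Rightarrow> 'a endo" assume "bounded (range f)"
  hence "bounded (range (\<lambda>n. Rep_endo (f n)))"
    by (auto simp: bounded_iff Rep_norm)
  then obtain l r where "strict_mono r" "((\<lambda>n. Rep_endo (f n)) \<circ> r) \<longlonglongrightarrow> l"
    using bounded_imp_convergent_subsequence by blast
  moreover have "(f \<circ> r) \<longlonglongrightarrow> Abs_endo l"
    using calculation(2) by (simp add: tendsto_Rep_iff Abs_endo_inverse o_def)
  ultimately show "\<exists>l r. strict_mono r \<and> (f \<circ> r) \<longlonglongrightarrow> l" by blast
qed

definition app :: "'a::euclidean_space endo \<Rightarrow> 'a \<Rightarrow> 'a" where
  "app x v = blinfun_apply (Rep_endo x) v"

definition mk :: "('a::euclidean_space \<Rightarrow> 'a) \<Rightarrow> 'a endo" where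
  "mk f = Abs_endo (Blinfun f)"

lemma app_mk: "linear f \<Longrightarrow> app (mk f) = f"
  unfolding app_def[abs_def] mk_def
  by (simp add: Abs_endo_inverse bounded_linear_Blinfun_apply linear_conv_bounded_linear)

lemma bounded_bilinear_app: "bounded_bilinear app"
proof -
  have *: "app = (\<lambda>x. blinfun_apply (Rep_endo x))" by (intro ext) (simp add: app_def)
  show ?thesis unfolding *
    apply (rule bounded_bilinear.intro)
    apply (simp_all add: plus_endo.rep_eq scaleR_endo.rep_eq blinfun.bilinear_simps)
    apply (rule exI[where x=1]) apply (simp add: Rep_norm[symmetric] norm_blinfun)
    done
qed

interpretation app: bounded_bilinear app by (rule bounded_bilinear_app)

lemma app_mult: "app (x * y) v = app x (app y v)"
  by (simp add: app_def times_endo.rep_eq)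
lemma app_one[simp]: "app 1 v = v"
  by (simp add: app_def one_endo.rep_eq)
lemma norm_app: "norm (app x v) \<le> norm x * norm v"
  by (simp add: app_def Rep_norm[symmetric] norm_blinfun)
lemma endo_eqI: "(\<And>v. app x v = app y v) \<Longrightarrow> x = y"
  by (metis Rep_endo_inject app_def blinfun_eqI)
lemma linear_app: "linear (app x)"
  by (rule bounded_linear.linear[OF app.bounded_linear_right])


lemma isCont_exp_gen: "isCont (exp :: 'a::{real_normed_algebra_1,banach} \<Rightarrow> 'a) x"
proof -
  let ?r = "norm x + 1"
  have ul: "uniform_limit (cball 0 ?r) (\<lambda>n y. \<Sum>i<n. y^i /\<^sub>R fact i) (\<lambda>y. suminf (\<lambda>i. (y::'a)^i /\<^sub>R fact i)) sequentially"
  proof (rule Weierstrass_m_test[where M="\<lambda>i. ?r^i /\<^sub>R fact i"])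
    fix n and y :: 'a assume "y \<in> cball 0 ?r"
    hence "norm y \<le> ?r" by simp
    hence "norm (y ^ n) \<le> ?r ^ n" by (meson norm_ge_zero norm_power_ineq order_trans power_mono)
    thus "norm (y^n /\<^sub>R fact n) \<le> ?r^n /\<^sub>R fact n" by (simp add: divide_right_mono)
  next
    show "summable (\<lambda>i. ?r^i /\<^sub>R fact i)" by (rule summable_exp_generic)
  qed
  have "continuous_on (cball 0 ?r) (\<lambda>y. suminf (\<lambda>i. (y::'a)^i /\<^sub>R fact i))"
    apply (rule uniform_limit_theorem[OF _ ul])
     apply (intro always_eventually allI continuous_intros)
    apply simp
    done
  hence "continuous_on (cball 0 ?r) (exp :: 'a \<Rightarrow> 'a)" unfolding exp_def .
  hence "continuous_on (ball 0 ?r) (exp :: 'a \<Rightarrow> 'a)" by (rule continuous_on_subset) auto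
  thus ?thesis by (simp add: continuous_on_eq_continuous_at)
qed

lemma tendsto_exp_gen[tendsto_intros]:
  "(f \<longlongrightarrow> l) F \<Longrightarrow> ((\<lambda>x. exp (f x :: 'a::{real_normed_algebra_1,banach})) \<longlongrightarrow> exp l) F"
  using isCont_exp_gen isCont_tendsto_compose by blast

lemma exp_sub_bound:
  fixes x :: "'a::{real_normed_algebra_1,banach}"
  shows "norm (exp x - 1 - x) \<le> norm x ^ 2 * exp (norm x)"
proof -
  let ?f = "\<lambda>n. x^n /\<^sub>R fact n"
  have "?f sums exp x" by (rule exp_converges)
  hence s1: "(\<lambda>n. ?f (Suc n)) sums (exp x - ?f 0)"
    using sums_Suc_iff[of ?f "exp x - ?f 0"] by (simp only: diff_add_cancel)
  hence "(\<lambda>n. ?f (Suc (Suc n))) sums (exp x - ?f 0 - ?f (Suc 0))"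
    using sums_Suc_iff[of "\<lambda>n. ?f (Suc n)" "exp x - ?f 0 - ?f (Suc 0)"] by (simp only: diff_add_cancel)
  hence "(\<lambda>n. ?f (Suc (Suc n))) sums (exp x - 1 - x)" by simp
  hence eq: "exp x - 1 - x = suminf (\<lambda>n. ?f (Suc (Suc n)))" by (simp add: sums_iff)
  let ?g = "\<lambda>n. norm x ^ 2 * (norm x ^ n /\<^sub>R fact n)"
  have gs: "?g sums (norm x ^ 2 * exp (norm x))"
    by (rule sums_mult) (rule exp_converges)
  have le: "norm (?f (Suc (Suc n))) \<le> ?g n" for n
  proof -
    have nb: "norm (x^k /\<^sub>R fact k) \<le> norm x ^ k / fact k" for k
      using norm_power_ineq[of x k] by (simp add: field_simps)
    have "norm (?f (Suc (Suc n))) \<le> norm x ^ (Suc (Suc n)) / fact (Suc (Suc n))"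
      by (rule nb)
    also have "\<dots> \<le> norm x ^ (Suc (Suc n)) / fact n"
      apply (rule divide_left_mono)
        apply (rule fact_mono)
      by auto
    also have "\<dots> = ?g n" by (simp add: power_add divide_inverse power2_eq_square)
    finally show ?thesis .
  qed
  have sn: "summable (\<lambda>n. norm (?f (Suc (Suc n))))"
    by (rule summable_comparison_test[OF _ sums_summable[OF gs]]) (use le in auto)
  have "norm (exp x - 1 - x) \<le> suminf (\<lambda>n. norm (?f (Suc (Suc n))))"
    unfolding eq by (rule summable_norm[OF sn])
  also have "\<dots> \<le> suminf ?g"
    by (rule suminf_le[OF le sn sums_summable[OF gs]])
  also have "\<dots> = norm x ^ 2 * exp (norm x)" using gs by (simp add: sums_iff)
  finally show ?thesis .
qed

lemma power_diff_bound:
  fixes a b :: "'a::real_normed_algebra_1"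
  assumes "norm a \<le> M" "norm b \<le> M"
  shows "norm (a^m - b^m) \<le> real m * M^(m - 1) * norm (a - b)"
proof (induction m)
  case 0 then show ?case by simp
next
  case (Suc m)
  have M0: "0 \<le> M" using assms(1) norm_ge_zero order_trans by blast
  have "a^Suc m - b^Suc m = a * (a^m - b^m) + (a - b) * b^m"
    by (simp add: algebra_simps)
  hence "norm (a^Suc m - b^Suc m) \<le> norm a * norm (a^m - b^m) + norm (a - b) * norm (b^m)"
    by (metis norm_triangle_le norm_mult_ineq add_mono)
  also have "\<dots> \<le> M * (real m * M^(m - 1) * norm (a - b)) + norm (a - b) * M^m"
    apply (rule add_mono)
     apply (rule mult_mono[OF assms(1) Suc.IH]; simp add: M0)
    apply (rule mult_left_mono; simp?)
    by (meson assms(2) norm_ge_zero norm_power_ineq order_trans power_mono)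
  also have "\<dots> = real (Suc m) * M^(Suc m - 1) * norm (a - b)"
    by (cases m) (simp_all add: algebra_simps)
  finally show ?case .
qed

lemma exp_scaleR_nat:
  fixes x :: "'a::{real_normed_algebra_1,banach}"
  shows "exp (real m *\<^sub>R x) = exp x ^ m"
proof (induction m)
  case 0 then show ?case by simp
next
  case (Suc m)
  have "exp (real (Suc m) *\<^sub>R x) = exp (real m *\<^sub>R x + x)" by (simp add: algebra_simps)
  also have "\<dots> = exp (real m *\<^sub>R x) * exp x"
    by (rule exp_add_commuting) simp
  finally show ?case using Suc.IH by (metis power_Suc2)
qed

lemma exp_deriv0:
  fixes A :: "'a::{real_normed_algebra_1,banach}"
  shows "((\<lambda>t. exp (t *\<^sub>R A)) has_vector_derivative A) (at 0)"
  using exp_scaleR_has_vector_derivative_right[of A 0 UNIV] by simp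

lemma exp_conj:
  fixes h h' X :: "'a::{real_normed_algebra_1,banach}"
  assumes "h * h' = 1" "h' * h = 1"
  shows "exp (h * X * h') = h * exp X * h'"
proof -
  have pw: "(h * X * h')^n = h * X^n * h'" for n
  proof (induction n)
    case 0 then show ?case using assms by simp
  next
    case (Suc n)
    have "(h * X * h')^Suc n = (h * X^n * h') * (h * X * h')" by (simp only: Suc.IH power_Suc2)
    also have "\<dots> = h * X^n * (h' * h) * X * h'" by (simp add: mult.assoc)
    also have "\<dots> = h * X^Suc n * h'" using assms by (simp del: power_Suc add: mult.assoc power_Suc2)
    finally show ?case .
  qed
  have "exp (h * X * h') = (\<Sum>n. h * (X^n /\<^sub>R fact n) * h')"
    by (simp add: exp_def pw)
  also have "\<dots> = (\<Sum>n. h * (X^n /\<^sub>R fact n)) * h'"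
    by (rule suminf_mult2[symmetric]) (intro summable_mult summable_exp_generic)
  also have "(\<Sum>n. h * (X^n /\<^sub>R fact n)) = h * exp X"
    using suminf_mult[OF summable_exp_generic[of X], of h] by (simp add: exp_def)
  finally show ?thesis .
qed


lemma subseq_freq:
  fixes P :: "nat \<Rightarrow> nat \<Rightarrow> bool"
  assumes "\<And>k. \<exists>\<^sub>F n in sequentially. P k n"
  shows "\<exists>r. strict_mono r \<and> (\<forall>k. P k (r k))"
proof -
  have "\<exists>f. \<forall>n. P n (f n) \<and> f n < f (Suc n)"
  proof (rule dependent_nat_choice)
    show "\<exists>x. P 0 x" using assms[of 0] frequently_ex by blast
    fix x n assume "P n x"
    from assms[of "Suc n"] obtain y where "y \<ge> Suc x" "P (Suc n) y"
      unfolding frequently_sequentially by blast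
    thus "\<exists>y. P (Suc n) y \<and> x < y" by auto
  qed
  thus ?thesis by (auto simp: strict_mono_Suc_iff)
qed

lemma expdiff:
  fixes X :: "'a::{real_normed_algebra_1,banach}"
  assumes "s \<longlonglongrightarrow> 0" "\<And>n. s n \<noteq> 0"
  shows "(\<lambda>n. (exp (s n *\<^sub>R X) - 1) /\<^sub>R s n) \<longlonglongrightarrow> X"
proof -
  have "(\<lambda>n. (exp (s n *\<^sub>R X) - 1) /\<^sub>R s n - X) \<longlonglongrightarrow> 0"
  proof (rule Lim_null_comparison)
    show "\<forall>\<^sub>F n in sequentially. norm ((exp (s n *\<^sub>R X) - 1) /\<^sub>R s n - X) \<le> \<bar>s n\<bar> * norm X ^ 2 * exp (\<bar>s n\<bar> * norm X)"
    proof (intro always_eventually allI)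
      fix n
      have "(exp (s n *\<^sub>R X) - 1) /\<^sub>R s n - X = (exp (s n *\<^sub>R X) - 1 - s n *\<^sub>R X) /\<^sub>R s n"
        using assms(2)[of n] by (simp add: algebra_simps)
      hence "norm ((exp (s n *\<^sub>R X) - 1) /\<^sub>R s n - X) = norm (exp (s n *\<^sub>R X) - 1 - s n *\<^sub>R X) / \<bar>s n\<bar>"
        by (simp add: divide_inverse mult.commute)
      also have "\<dots> \<le> (norm (s n *\<^sub>R X) ^ 2 * exp (norm (s n *\<^sub>R X))) / \<bar>s n\<bar>"
        by (rule divide_right_mono[OF exp_sub_bound]) simp
      also have "\<dots> = \<bar>s n\<bar> * norm X ^ 2 * exp (\<bar>s n\<bar> * norm X)"
        using assms(2)[of n] by (simp add: power2_eq_square)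
      finally show "norm ((exp (s n *\<^sub>R X) - 1) /\<^sub>R s n - X) \<le> \<bar>s n\<bar> * norm X ^ 2 * exp (\<bar>s n\<bar> * norm X)" .
    qed
    show "(\<lambda>n. \<bar>s n\<bar> * norm X ^ 2 * exp (\<bar>s n\<bar> * norm X)) \<longlonglongrightarrow> 0"
      using assms(1) by (auto intro!: tendsto_eq_intros)
  qed
  thus ?thesis by (simp add: LIM_zero_iff)
qed

locale cgrp =
  fixes K :: "'a::euclidean_space endo set"
  assumes cpt: "compact K"
    and one_in: "1 \<in> K"
    and mult_in: "\<And>a b. a \<in> K \<Longrightarrow> b \<in> K \<Longrightarrow> a * b \<in> K"
    and inv_ex: "\<And>a. a \<in> K \<Longrightarrow> \<exists>b\<in>K. a * b = 1 \<and> b * a = 1"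
    and orth: "\<And>a u w. a \<in> K \<Longrightarrow> app a u \<bullet> app a w = u \<bullet> w"
begin

definition lie :: "'a endo set" where "lie = {X. \<forall>t. exp (t *\<^sub>R X) \<in> K}"

lemma closedK: "closed K" using cpt compact_imp_closed by blast

lemma pow_in: "a \<in> K \<Longrightarrow> a ^ n \<in> K"
  by (induction n) (auto intro: one_in mult_in)

lemma norm_app_K: "a \<in> K \<Longrightarrow> norm (app a u) = norm u"
  using orth[of a u u] by (simp add: norm_eq_sqrt_inner)

lemma dirlim:
  assumes k: "\<And>n. k n \<in> K" and s: "\<And>n. s n > 0" "s \<longlonglongrightarrow> 0"
    and U: "(\<lambda>n. (k n - 1) /\<^sub>R s n) \<longlonglongrightarrow> X"
  shows "X \<in> lie"
proof -
  have pos: "exp (t *\<^sub>R X) \<in> K" if t: "t \<ge> 0" for t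
  proof -
    define m where "m n = nat \<lfloor>t / s n\<rfloor>" for n
    define U where "U n = (k n - 1) /\<^sub>R s n" for n
    define B where "B n = k n - 1" for n
    have BU: "B n = s n *\<^sub>R U n" for n using s(1)[of n] by (simp add: U_def B_def)
    have mle: "real (m n) * s n \<le> t" for n
    proof -
      have "real (m n) \<le> t / s n" using t s(1)[of n] by (simp add: m_def)
      thus ?thesis using s(1)[of n] by (simp add: pos_le_divide_eq)
    qed
    have mge: "t - s n \<le> real (m n) * s n" for n
    proof -
      have "t / s n - 1 \<le> real (m n)" using t s(1)[of n] by (simp add: m_def)
      hence "(t / s n - 1) * s n \<le> real (m n) * s n" using s(1)[of n] by (simp add: mult_right_mono)
      thus ?thesis using s(1)[of n] by (simp add: algebra_simps)
    qed
    have ms: "(\<lambda>n. real (m n) * s n) \<longlonglongrightarrow> t"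
    proof (rule tendsto_sandwich[of "\<lambda>n. t - s n" _ _ "\<lambda>n. t"])
      show "\<forall>\<^sub>F n in sequentially. t - s n \<le> real (m n) * s n" using mge by simp
      show "\<forall>\<^sub>F n in sequentially. real (m n) * s n \<le> t" using mle by simp
      show "(\<lambda>n. t - s n) \<longlonglongrightarrow> t" using s(2) by (auto intro!: tendsto_eq_intros)
    qed simp
    have Ut: "U \<longlonglongrightarrow> X" using U by (simp add: U_def[abs_def])
    have e1: "(\<lambda>n. exp (real (m n) *\<^sub>R B n)) \<longlonglongrightarrow> exp (t *\<^sub>R X)"
    proof -
      have "(\<lambda>n. (real (m n) * s n) *\<^sub>R U n) \<longlonglongrightarrow> t *\<^sub>R X"
        by (intro tendsto_scaleR ms Ut)
      hence "(\<lambda>n. real (m n) *\<^sub>R B n) \<longlonglongrightarrow> t *\<^sub>R X" by (simp add: BU)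
      thus ?thesis by (rule tendsto_exp_gen)
    qed
    have bound: "norm (k n ^ m n - exp (real (m n) *\<^sub>R B n)) \<le>
        (real (m n) * s n) * s n * norm (U n) ^ 2 * exp ((real (m n) * s n + s n) * norm (U n))" for n
    proof -
      let ?M = "exp (norm (B n))"
      have kB: "k n = 1 + B n" by (simp add: B_def)
      have a1: "norm (k n) \<le> ?M" unfolding kB
        by (rule order_trans[OF norm_triangle_ineq]) (simp add: add.commute)
      have a2: "norm (exp (B n)) \<le> ?M" by (rule norm_exp)
      have M1: "1 \<le> ?M" by simp
      have "norm (k n ^ m n - exp (real (m n) *\<^sub>R B n)) = norm (k n ^ m n - exp (B n) ^ m n)"
        by (simp add: exp_scaleR_nat)
      also have "\<dots> \<le> real (m n) * ?M ^ (m n - 1) * norm (k n - exp (B n))"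
        by (rule power_diff_bound[OF a1 a2])
      also have "\<dots> \<le> real (m n) * ?M ^ (m n) * (norm (B n) ^ 2 * exp (norm (B n)))"
      proof (rule mult_mono)
        show "real (m n) * ?M ^ (m n - 1) \<le> real (m n) * ?M ^ (m n)"
          by (rule mult_left_mono) (auto intro: power_increasing M1)
        have "norm (k n - exp (B n)) = norm (exp (B n) - 1 - B n)"
          by (simp add: kB norm_minus_commute algebra_simps)
        thus "norm (k n - exp (B n)) \<le> norm (B n) ^ 2 * exp (norm (B n))"
          using exp_sub_bound by simp
      qed simp_all
      also have "\<dots> = real (m n) * norm (B n) ^ 2 * exp ((real (m n) + 1) * norm (B n))"
        by (simp add: exp_of_nat_mult[symmetric] exp_add[symmetric] algebra_simps)
      also have "\<dots> = (real (m n) * s n) * s n * norm (U n) ^ 2 * exp ((real (m n) * s n + s n) * norm (U n))"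
        using s(1)[of n] by (simp add: BU power2_eq_square algebra_simps)
      finally show ?thesis .
    qed
    have "(\<lambda>n. k n ^ m n - exp (real (m n) *\<^sub>R B n)) \<longlonglongrightarrow> 0"
    proof (rule Lim_null_comparison[OF always_eventually[OF allI[OF bound]]])
      show "(\<lambda>n. (real (m n) * s n) * s n * norm (U n) ^ 2 * exp ((real (m n) * s n + s n) * norm (U n))) \<longlonglongrightarrow> 0"
      proof -
        have "(\<lambda>n. (real (m n) * s n) * s n * norm (U n) ^ 2 * exp ((real (m n) * s n + s n) * norm (U n))) \<longlonglongrightarrow> t * 0 * norm X ^ 2 * exp ((t + 0) * norm X)"
          by (rule ms s(2) Ut tendsto_mult tendsto_exp tendsto_add tendsto_power tendsto_norm)+
        thus ?thesis by simp
      qed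
    qed
    hence "(\<lambda>n. (k n ^ m n - exp (real (m n) *\<^sub>R B n)) + exp (real (m n) *\<^sub>R B n)) \<longlonglongrightarrow> 0 + exp (t *\<^sub>R X)"
      by (intro tendsto_add e1)
    hence "(\<lambda>n. k n ^ m n) \<longlonglongrightarrow> exp (t *\<^sub>R X)" by simp
    thus ?thesis by (rule closed_sequentially[OF closedK pow_in[OF k]])
  qed
  show ?thesis unfolding lie_def
  proof (intro CollectI allI)
    fix t :: real
    show "exp (t *\<^sub>R X) \<in> K"
    proof (cases "t \<ge> 0")
      case True thus ?thesis by (rule pos)
    next
      case False
      hence "exp ((-t) *\<^sub>R X) \<in> K" by (intro pos) simp
      then obtain b where b: "b \<in> K" "exp ((-t) *\<^sub>R X) * b = 1" by (metis inv_ex)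
      have "exp (t *\<^sub>R X) * exp ((-t) *\<^sub>R X) = 1"
        by (simp add: exp_add_commuting[symmetric] algebra_simps)
      hence "exp (t *\<^sub>R X) = b"
        by (metis b(2) mult.assoc mult_1_left mult_1_right)
      thus ?thesis using b(1) by simp
    qed
  qed
qed


lemma exp_in: "X \<in> lie \<Longrightarrow> exp (t *\<^sub>R X) \<in> K"
  by (simp add: lie_def)

lemma lie_scale: "X \<in> lie \<Longrightarrow> c *\<^sub>R X \<in> lie"
  by (simp add: lie_def)

lemma lie_add:
  assumes X: "X \<in> lie" and Y: "Y \<in> lie"
  shows "X + Y \<in> lie"
proof -
  define s where "s n = inverse (real (Suc n))" for n
  have s0: "s \<longlonglongrightarrow> 0" unfolding s_def by (rule LIMSEQ_inverse_real_of_nat)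
  have sp: "s n > 0" for n by (simp add: s_def)
  have snz: "s n \<noteq> 0" for n using sp[of n] by simp
  define k where "k n = exp (s n *\<^sub>R X) * exp (s n *\<^sub>R Y)" for n
  have kK: "k n \<in> K" for n unfolding k_def by (intro mult_in exp_in X Y)
  have eq: "(k n - 1) /\<^sub>R s n = ((exp (s n *\<^sub>R X) - 1) /\<^sub>R s n) * exp (s n *\<^sub>R Y) + (exp (s n *\<^sub>R Y) - 1) /\<^sub>R s n" for n
    by (simp add: k_def algebra_simps scaleR_diff_right)
  have e2: "(\<lambda>n. exp (s n *\<^sub>R Y)) \<longlonglongrightarrow> exp (0 *\<^sub>R Y)"
    by (intro tendsto_exp_gen tendsto_scaleR s0 tendsto_const)
  have "(\<lambda>n. ((exp (s n *\<^sub>R X) - 1) /\<^sub>R s n) * exp (s n *\<^sub>R Y) + (exp (s n *\<^sub>R Y) - 1) /\<^sub>R s n) \<longlonglongrightarrow> X * exp (0 *\<^sub>R Y) + Y"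
    by (intro tendsto_add tendsto_mult expdiff[OF s0 snz] e2)
  hence "(\<lambda>n. (k n - 1) /\<^sub>R s n) \<longlonglongrightarrow> X + Y" by (simp add: eq)
  thus ?thesis by (rule dirlim[OF kK sp s0])
qed

lemma lie_closed: "closed lie"
proof (rule closed_sequential_limits[THEN iffD2], intro allI impI, elim conjE)
  fix f l assume f: "\<forall>n. f n \<in> lie" and l: "f \<longlonglongrightarrow> l"
  show "l \<in> lie" unfolding lie_def
  proof (intro CollectI allI)
    fix t :: real
    have "(\<lambda>n. exp (t *\<^sub>R f n)) \<longlonglongrightarrow> exp (t *\<^sub>R l)"
      by (intro tendsto_exp_gen tendsto_scaleR tendsto_const l)
    moreover have "exp (t *\<^sub>R f n) \<in> K" for n using f exp_in by blast
    ultimately show "exp (t *\<^sub>R l) \<in> K"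
      using closed_sequentially[OF closedK, of "\<lambda>n. exp (t *\<^sub>R f n)"] by blast
  qed
qed

lemma lie_conj:
  assumes "X \<in> lie" "h \<in> K" "h' \<in> K" "h * h' = 1" "h' * h = 1"
  shows "h * X * h' \<in> lie"
  unfolding lie_def
proof (intro CollectI allI)
  fix t :: real
  have "exp (t *\<^sub>R (h * X * h')) = exp (h * (t *\<^sub>R X) * h')" by simp
  also have "\<dots> = h * exp (t *\<^sub>R X) * h'" by (rule exp_conj[OF assms(4,5)])
  finally show "exp (t *\<^sub>R (h * X * h')) \<in> K"
    using assms exp_in by (simp add: mult_in)
qed

lemma app_scaleR: "app (c *\<^sub>R X) v = c *\<^sub>R app X v"
  by (rule app.scaleR_left)

lemma app_pow_zero: "app X p = 0 \<Longrightarrow> app (X ^ Suc n) p = 0"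
  by (induction n) (simp_all add: app_mult app.zero_right)

lemma exp_fix:
  assumes "app X p = 0"
  shows "app (exp X) p = p"
proof -
  have t: "app (X^n /\<^sub>R fact n) p = (if n = 0 then p else 0)" for n
    by (cases n) (simp_all add: app_scaleR app_pow_zero[OF assms] del: power_Suc)
  have "app (exp X) p = (\<Sum>n. app (X^n /\<^sub>R fact n) p)"
    unfolding exp_def
    by (rule bounded_linear.suminf[OF app.bounded_linear_left summable_exp_generic])
  also have "\<dots> = (\<Sum>n. if n = 0 then p else 0)" by (simp only: t)
  also have "\<dots> = p" using sums_single[of 0 "\<lambda>_. p"] by (simp add: sums_iff)
  finally show ?thesis .
qed

lemma inv_K:
  assumes "a \<in> K" "app a p = p"
  shows "\<exists>b\<in>K. a * b = 1 \<and> b * a = 1 \<and> app b p = p"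
proof -
  obtain b where b: "b \<in> K" "a * b = 1" "b * a = 1" using inv_ex[OF assms(1)] by blast
  have "app b p = app b (app a p)" using assms(2) by simp
  also have "\<dots> = p" by (simp add: app_mult[symmetric] b(3))
  finally show ?thesis using b by blast
qed

end


context cgrp begin

lemma app_cont: "continuous_on UNIV (\<lambda>k. app k p)"
  by (intro linear_continuous_on app.bounded_linear_left)

lemma tangent_in_lie:
  assumes q: "\<And>n. \<exists>k\<in>K. app k p = q n"
    and t: "\<And>n. t n > 0" "t \<longlonglongrightarrow> 0"
    and D: "(\<lambda>n. (q n - p) /\<^sub>R t n) \<longlonglongrightarrow> w"
  shows "\<exists>Z\<in>lie. app Z p = w"
proof -
  have "(\<lambda>n. p + t n *\<^sub>R ((q n - p) /\<^sub>R t n)) \<longlonglongrightarrow> p + 0 *\<^sub>R w"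
    by (intro tendsto_add tendsto_const tendsto_scaleR t(2) D)
  moreover have "p + t n *\<^sub>R ((q n - p) /\<^sub>R t n) = q n" for n using t(1)[of n] by simp
  ultimately have qp: "q \<longlonglongrightarrow> p" by simp
  define M where "M n = {k\<in>K. app k p = q n}" for n
  have Mc: "compact (M n)" for n
  proof -
    have "M n = K \<inter> {k. app k p = q n}" by (auto simp: M_def)
    moreover have "closed {k. app k p = q n}"
      by (rule closed_Collect_eq[OF app_cont continuous_on_const])
    ultimately show ?thesis using cpt compact_Int_closed by auto
  qed
  have Mne: "M n \<noteq> {}" for n using q[of n] by (auto simp: M_def)
  have "\<exists>k. k \<in> M n \<and> (\<forall>k'\<in>M n. norm (k - 1) \<le> norm (k' - 1))" for n
  proof -
    have "continuous_on (M n) (\<lambda>k. norm (k - 1))" by (intro continuous_intros)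
    thus ?thesis using continuous_attains_inf[OF Mc[of n] Mne[of n], where f="\<lambda>k. norm (k - 1)"] by blast
  qed
  then obtain k where kM: "\<And>n. k n \<in> M n" and kmin: "\<And>n k'. k' \<in> M n \<Longrightarrow> norm (k n - 1) \<le> norm (k' - 1)"
    by metis
  have kK: "k n \<in> K" and kp: "app (k n) p = q n" for n using kM[of n] by (auto simp: M_def)
  define B where "B n = k n - 1" for n
  have Bp: "app (B n) p = q n - p" for n by (simp add: B_def app.diff_left kp)
  have B0: "B \<longlonglongrightarrow> 0"
  proof (rule ccontr)
    assume "\<not> B \<longlonglongrightarrow> 0"
    then obtain e where e: "e > 0" "\<exists>\<^sub>F n in sequentially. \<not> norm (B n) < e"
      by (auto simp: tendsto_iff not_eventually)
    obtain r1 :: "nat \<Rightarrow> nat" where r1: "strict_mono r1" "\<And>j. \<not> norm (B (r1 j)) < e"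
      using subseq_freq[of "\<lambda>_ n. \<not> norm (B n) < e", OF e(2)] by blast
    obtain l r2 where l: "l \<in> K" "strict_mono r2" "((k \<circ> r1) \<circ> r2) \<longlonglongrightarrow> l"
      using compact_imp_seq_compact[OF cpt] kK unfolding seq_compact_def by (metis comp_apply)
    define r where "r = r1 \<circ> r2"
    have r: "strict_mono r" unfolding r_def using r1(1) l(2) by (rule strict_mono_o)
    have klim: "(\<lambda>j. k (r j)) \<longlonglongrightarrow> l" using l(3) by (simp add: r_def o_def)
    have "(\<lambda>j. app (k (r j)) p) \<longlonglongrightarrow> app l p"
      by (intro app.tendsto klim tendsto_const)
    moreover have "(\<lambda>j. app (k (r j)) p) \<longlonglongrightarrow> p"
      using LIMSEQ_subseq_LIMSEQ[OF qp r] by (simp add: kp o_def)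
    ultimately have lp: "app l p = p" using LIMSEQ_unique by blast
    obtain l' where l': "l' \<in> K" "l * l' = 1" "app l' p = p" using inv_K[OF l(1) lp] by blast
    have "(\<lambda>j. k (r j) * l' - 1) \<longlonglongrightarrow> l * l' - 1"
      by (intro tendsto_diff tendsto_mult klim tendsto_const)
    hence "(\<lambda>j. k (r j) * l' - 1) \<longlonglongrightarrow> 0" using l'(2) by simp
    then have "\<forall>\<^sub>F j in sequentially. norm (k (r j) * l' - 1) < e"
      using e(1) by (auto simp: tendsto_iff)
    then obtain N where N: "norm (k (r N) * l' - 1) < e" by (auto simp: eventually_sequentially)
    have "k (r N) * l' \<in> M (r N)"
      using kK[of "r N"] l' by (simp add: M_def mult_in app_mult kp)
    hence "norm (B (r N)) \<le> norm (k (r N) * l' - 1)" unfolding B_def by (rule kmin)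
    moreover have "\<not> norm (B (r N)) < e" using r1(2)[of "r2 N"] by (simp add: r_def)
    ultimately show False using N by simp
  qed
  have "\<exists>C. \<forall>\<^sub>F n in sequentially. norm (B n) \<le> C * norm (app (B n) p)"
  proof (rule ccontr)
    assume "\<not> ?thesis"
    hence fr: "\<exists>\<^sub>F n in sequentially. \<not> norm (B n) \<le> real (Suc j) * norm (app (B n) p)" for j
      by (auto simp: not_eventually)
    obtain r where r: "strict_mono r" "\<And>j. \<not> norm (B (r j)) \<le> real (Suc j) * norm (app (B (r j)) p)"
      using subseq_freq[of "\<lambda>j n. \<not> norm (B n) \<le> real (Suc j) * norm (app (B n) p)", OF fr] by blast
    have Bnz: "B (r j) \<noteq> 0" for j using r(2)[of j] by auto
    define U where "U j = B (r j) /\<^sub>R norm (B (r j))" for j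
    have nU: "norm (U j) = 1" for j using Bnz[of j] by (simp add: U_def)
    have Up: "norm (app (U j) p) \<le> inverse (real (Suc j))" for j
    proof -
      have "real (Suc j) * norm (app (B (r j)) p) < norm (B (r j))" using r(2)[of j] by simp
      hence "norm (app (B (r j)) p) / norm (B (r j)) < inverse (real (Suc j))"
        using Bnz[of j] by (simp add: field_simps)
      thus ?thesis by (simp add: U_def app_scaleR divide_inverse mult.commute)
    qed
    have Up0: "(\<lambda>j. app (U j) p) \<longlonglongrightarrow> 0"
      by (rule Lim_null_comparison[OF always_eventually[OF allI[OF Up]] LIMSEQ_inverse_real_of_nat])
    have "bounded (range U)" using nU by (auto simp: bounded_iff)
    then obtain X r2 where r2: "strict_mono r2" "(U \<circ> r2) \<longlonglongrightarrow> X"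
      using bounded_imp_convergent_subsequence by blast
    have nX: "norm X = 1"
    proof -
      have "(\<lambda>j. norm ((U \<circ> r2) j)) \<longlonglongrightarrow> norm X" by (intro tendsto_norm r2(2))
      thus ?thesis using nU by (simp add: o_def LIMSEQ_const_iff)
    qed
    have "(\<lambda>j. app ((U \<circ> r2) j) p) \<longlonglongrightarrow> app X p" by (intro app.tendsto r2(2) tendsto_const)
    moreover have "(\<lambda>j. app ((U \<circ> r2) j) p) \<longlonglongrightarrow> 0"
      using LIMSEQ_subseq_LIMSEQ[OF Up0 r2(1)] by (simp add: o_def)
    ultimately have Xp: "app X p = 0" using LIMSEQ_unique by blast
    define n where "n j = r (r2 j)" for j
    have n: "strict_mono n" unfolding n_def using strict_mono_o[OF r(1) r2(1)] by (simp add: o_def)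
    define s where "s j = norm (B (n j))" for j
    have sp: "s j > 0" for j using Bnz[of "r2 j"] by (simp add: s_def n_def)
    have s0: "s \<longlonglongrightarrow> 0"
    proof -
      have "(\<lambda>j. norm ((B \<circ> n) j)) \<longlonglongrightarrow> norm (0::'a endo)"
        by (intro tendsto_norm LIMSEQ_subseq_LIMSEQ[OF B0 n])
      thus ?thesis by (simp add: s_def[abs_def] o_def)
    qed
    define V where "V j = U (r2 j)" for j
    have V: "V \<longlonglongrightarrow> X" using r2(2) by (simp add: V_def[abs_def] o_def)
    have VB: "V j = (k (n j) - 1) /\<^sub>R s j" for j by (simp add: V_def U_def s_def n_def B_def)
    have VV: "V = (\<lambda>j. (k (n j) - 1) /\<^sub>R s j)" by (rule ext) (rule VB)
    have XL: "X \<in> lie"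
      by (rule dirlim[of "\<lambda>j. k (n j)" s]) (use kK sp s0 V VV in auto)
    define l where "l j = exp ((- s j) *\<^sub>R X)" for j
    have lK: "l j \<in> K" for j unfolding l_def by (rule exp_in[OF XL])
    have lp: "app (l j) p = p" for j unfolding l_def by (rule exp_fix) (simp add: app.minus_left app_scaleR Xp)
    have ineq: "1 \<le> norm ((k (n j) * l j - 1) /\<^sub>R s j)" for j
    proof -
      have "k (n j) * l j \<in> M (n j)" using kK lK lp by (simp add: M_def mult_in app_mult kp)
      hence "s j \<le> norm (k (n j) * l j - 1)" unfolding s_def B_def by (rule kmin)
      hence "1 \<le> norm (k (n j) * l j - 1) / s j" using sp[of j] by (simp add: le_divide_eq_1_pos)
      moreover have "norm ((k (n j) * l j - 1) /\<^sub>R s j) = inverse (s j) * norm (k (n j) * l j - 1)"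
        using sp[of j] by (simp only: norm_scaleR abs_of_pos positive_imp_inverse_positive)
      ultimately show ?thesis by (simp only: divide_inverse_commute)
    qed
    define E where "E j = (l j - 1) /\<^sub>R s j" for j
    have E: "E \<longlonglongrightarrow> - X"
    proof -
      have eqE: "E = (\<lambda>j. - ((exp ((- s j) *\<^sub>R X) - 1) /\<^sub>R (- s j)))"
        by (rule ext) (simp only: E_def l_def inverse_minus_eq scaleR_minus_left minus_minus)
      have "(\<lambda>j. (exp ((- s j) *\<^sub>R X) - 1) /\<^sub>R (- s j)) \<longlonglongrightarrow> X"
      proof (rule expdiff)
        show "(\<lambda>j. - s j) \<longlonglongrightarrow> 0" using tendsto_minus[OF s0] by (simp only: minus_zero)
        fix j show "- s j \<noteq> 0" using sp[of j] by linarith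
      qed
      thus ?thesis unfolding eqE by (rule tendsto_minus)
    qed
    have eqn: "(k (n j) * l j - 1) /\<^sub>R s j = V j + E j + s j *\<^sub>R (V j * E j)" for j
    proof -
      have k1: "k (n j) = 1 + s j *\<^sub>R V j" using sp[of j] by (simp add: VB)
      have l1: "l j = 1 + s j *\<^sub>R E j" using sp[of j] by (simp add: E_def)
      have "(1 + s j *\<^sub>R V j) * (1 + s j *\<^sub>R E j) - 1 = s j *\<^sub>R (V j + E j + s j *\<^sub>R (V j * E j))"
        by (simp add: ring_distribs scaleR_add_right)
      thus ?thesis using sp[of j] unfolding k1 l1 by simp
    qed
    have "(\<lambda>j. V j + E j + s j *\<^sub>R (V j * E j)) \<longlonglongrightarrow> X + - X + 0 *\<^sub>R (X * - X)"
      by (intro tendsto_add tendsto_scaleR tendsto_mult V E s0)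
    hence "(\<lambda>j. (k (n j) * l j - 1) /\<^sub>R s j) \<longlonglongrightarrow> 0" by (simp add: eqn)
    hence "\<forall>\<^sub>F j in sequentially. norm ((k (n j) * l j - 1) /\<^sub>R s j) < 1"
      by (auto simp: tendsto_iff)
    then obtain N where "norm ((k (n N) * l N - 1) /\<^sub>R s N) < 1" by (auto simp: eventually_sequentially)
    with ineq[of N] show False by simp
  qed
  then obtain C N where CN: "\<And>n. n \<ge> N \<Longrightarrow> norm (B n) \<le> C * norm (app (B n) p)"
    by (auto simp: eventually_sequentially)
  define W where "W n = B n /\<^sub>R t n" for n
  obtain Bd where Bd: "\<And>n. norm ((q n - p) /\<^sub>R t n) \<le> Bd"
    using convergent_imp_bounded[OF D] by (auto simp: bounded_iff)
  have WB: "norm (W (j + N)) \<le> \<bar>C\<bar> * Bd" for j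
  proof -
    have "norm (W (j + N)) = norm (B (j + N)) / t (j + N)" using t(1)[of "j + N"] by (simp add: W_def divide_inverse mult.commute)
    also have "\<dots> \<le> C * norm (app (B (j + N)) p) / t (j + N)"
      by (rule divide_right_mono[OF CN]) (use t(1)[of "j+N"] in auto)
    also have "\<dots> = C * norm ((q (j + N) - p) /\<^sub>R t (j + N))" using t(1)[of "j + N"] by (simp add: Bp divide_inverse mult.commute mult.left_commute)
    also have "\<dots> \<le> \<bar>C\<bar> * norm ((q (j + N) - p) /\<^sub>R t (j + N))"
      by (rule mult_right_mono[OF abs_ge_self norm_ge_zero])
    also have "\<dots> \<le> \<bar>C\<bar> * Bd" by (rule mult_left_mono[OF Bd abs_ge_zero])
    finally show ?thesis .
  qed
  have "bounded (range (\<lambda>j. W (j + N)))" using WB by (auto simp: bounded_iff)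
  then obtain Z r where r: "strict_mono r" "((\<lambda>j. W (j + N)) \<circ> r) \<longlonglongrightarrow> Z"
    using bounded_imp_convergent_subsequence by blast
  define r' where "r' j = r j + N" for j
  have r': "strict_mono r'" using r(1) by (simp add: strict_mono_def r'_def)
  have Wl: "(\<lambda>j. W (r' j)) \<longlonglongrightarrow> Z" using r(2) by (simp add: o_def r'_def)
  have "Z \<in> lie"
  proof (rule dirlim[of "\<lambda>j. k (r' j)" "\<lambda>j. t (r' j)"])
    show "(\<lambda>j. t (r' j)) \<longlonglongrightarrow> 0" using LIMSEQ_subseq_LIMSEQ[OF t(2) r'] by (simp add: o_def)
    show "(\<lambda>j. (k (r' j) - 1) /\<^sub>R t (r' j)) \<longlonglongrightarrow> Z" using Wl by (simp add: W_def B_def)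
  qed (use kK t(1) in auto)
  moreover have "app Z p = w"
  proof -
    have "(\<lambda>j. app (W (r' j)) p) \<longlonglongrightarrow> app Z p" by (intro app.tendsto Wl tendsto_const)
    moreover have "(\<lambda>j. app (W (r' j)) p) \<longlonglongrightarrow> w"
      using LIMSEQ_subseq_LIMSEQ[OF D r'] by (simp add: o_def W_def app_scaleR Bp)
    ultimately show ?thesis using LIMSEQ_unique by blast
  qed
  ultimately show ?thesis by blast
qed

end


definition HS :: "'a::euclidean_space endo \<Rightarrow> real" where
  "HS Y = (\<Sum>b\<in>Basis. (norm (app Y b))\<^sup>2)"

lemma norm_sq_basis: "(norm (x::'a::euclidean_space))\<^sup>2 = (\<Sum>c\<in>Basis. (x \<bullet> c)\<^sup>2)"
  unfolding power2_norm_eq_inner by (subst euclidean_inner) (simp add: power2_eq_square)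

lemma norm_endo_le: "norm (Y :: 'a::euclidean_space endo) \<le> (\<Sum>b\<in>Basis. norm (app Y b))"
  unfolding Rep_norm[symmetric] app_def by (rule norm_blinfun_euclidean_le)

lemma HS_cont: "continuous_on UNIV HS"
  unfolding HS_def[abs_def]
  by (intro continuous_intros linear_continuous_on app.bounded_linear_left)

lemma HS_parallelogram:
  "HS ((1/2) *\<^sub>R (A + B)) = (HS A + HS B) / 2 - HS (A - B) / 4"
proof -
  have "(norm (app ((1/2) *\<^sub>R (A + B)) b))\<^sup>2 = ((norm (app A b))\<^sup>2 + (norm (app B b))\<^sup>2) / 2 - (norm (app (A - B) b))\<^sup>2 / 4" for b
    apply (simp add: app.scaleR_left app.add_left app.diff_left power2_norm_eq_inner inner_add inner_diff
        inner_commute algebra_simps)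
    apply (simp add: field_simps)
    done
  thus ?thesis by (simp add: HS_def sum_subtractf sum_divide_distrib[symmetric] sum.distrib)
qed

lemma HS_pos: "A \<noteq> B \<Longrightarrow> HS (A - B) > 0"
proof -
  assume "A \<noteq> B"
  then obtain b where b: "b \<in> Basis" "app A b \<noteq> app B b"
    using linear_eq_stdbasis[OF linear_app linear_app] endo_eqI by metis
  hence "(norm (app (A - B) b))\<^sup>2 > 0" by (simp add: app.diff_left)
  thus ?thesis unfolding HS_def by (intro sum_pos2[OF finite_Basis b(1)]) auto
qed

context cgrp begin

lemma HS_adj:
  assumes g: "g \<in> K" "g * g' = 1"
  shows "(\<Sum>b\<in>Basis. (norm (app Y (app g' b)))\<^sup>2) = (\<Sum>c\<in>Basis. (norm (adjoint (app Y) c))\<^sup>2)"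
proof -
  have gi: "app g' b \<bullet> u = b \<bullet> app g u" for b u
  proof -
    have "app g (app g' b) \<bullet> app g u = app g' b \<bullet> u" by (rule orth[OF g(1)])
    moreover have "app g (app g' b) = b" using g(2) by (simp add: app_mult[symmetric])
    ultimately show ?thesis by simp
  qed
  have "(\<Sum>b\<in>Basis. (norm (app Y (app g' b)))\<^sup>2) = (\<Sum>b\<in>Basis. \<Sum>c\<in>Basis. (app Y (app g' b) \<bullet> c)\<^sup>2)"
    by (simp add: norm_sq_basis)
  also have "\<dots> = (\<Sum>b\<in>Basis. \<Sum>c\<in>Basis. (b \<bullet> app g (adjoint (app Y) c))\<^sup>2)"
  proof -
    have "app Y (app g' b) \<bullet> c = b \<bullet> app g (adjoint (app Y) c)" for b c
      using adjoint_works[OF linear_app[of Y], of "app g' b" c] gi[of b "adjoint (app Y) c"] by simp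
    thus ?thesis by (simp only:)
  qed
  also have "\<dots> = (\<Sum>c\<in>Basis. \<Sum>b\<in>Basis. (app g (adjoint (app Y) c) \<bullet> b)\<^sup>2)"
    by (subst sum.swap) (simp add: inner_commute)
  also have "\<dots> = (\<Sum>c\<in>Basis. (norm (app g (adjoint (app Y) c)))\<^sup>2)"
    by (simp add: norm_sq_basis)
  also have "\<dots> = (\<Sum>c\<in>Basis. (norm (adjoint (app Y) c))\<^sup>2)"
    by (simp add: norm_app_K[OF g(1)])
  finally show ?thesis .
qed

lemma HS_conj:
  assumes "h \<in> K" "h * h' = 1"
  shows "HS (h * Y * h') = HS Y"
proof -
  have "HS (h * Y * h') = (\<Sum>b\<in>Basis. (norm (app Y (app h' b)))\<^sup>2)"
    unfolding HS_def by (simp add: app_mult norm_app_K[OF assms(1)])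
  also have "\<dots> = (\<Sum>c\<in>Basis. (norm (adjoint (app Y) c))\<^sup>2)" by (rule HS_adj[OF assms])
  also have "\<dots> = (\<Sum>b\<in>Basis. (norm (app Y (app 1 b)))\<^sup>2)" by (rule HS_adj[OF one_in, symmetric]) simp
  finally show ?thesis by (simp add: HS_def)
qed

lemma avg:
  assumes Hs: "Hs \<subseteq> K" "\<And>h. h \<in> Hs \<Longrightarrow> app h p = p" "\<And>h. h \<in> Hs \<Longrightarrow> app h v = v"
    and Z: "Z \<in> lie"
  shows "\<exists>Y\<in>lie. (\<forall>h\<in>Hs. h * Y = Y * h) \<and> v \<bullet> app Y p = v \<bullet> app Z p"
proof -
  define c0 where "c0 = v \<bullet> app Z p"
  define S where "S = {Y\<in>lie. v \<bullet> app Y p = c0 \<and> HS Y \<le> HS Z}"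
  have pc: "continuous_on UNIV (\<lambda>Y. v \<bullet> app Y p)"
    by (intro continuous_intros linear_continuous_on app.bounded_linear_left)
  have "closed S"
  proof -
    have "S = lie \<inter> {Y. v \<bullet> app Y p = c0} \<inter> {Y. HS Y \<le> HS Z}" by (auto simp: S_def)
    moreover have "closed {Y. v \<bullet> app Y p = c0}" by (rule closed_Collect_eq[OF pc continuous_on_const])
    moreover have "closed {Y. HS Y \<le> HS Z}" by (rule closed_Collect_le[OF HS_cont continuous_on_const])
    ultimately show ?thesis using lie_closed by (auto intro!: closed_Int)
  qed
  moreover have "bounded S"
  proof -
    have "norm Y \<le> real DIM('a) * sqrt (HS Z)" if "Y \<in> S" for Y
    proof -
      have "norm (app Y b) \<le> sqrt (HS Z)" if b: "b \<in> Basis" for b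
      proof (rule real_le_rsqrt)
        have "(norm (app Y b))\<^sup>2 \<le> HS Y" unfolding HS_def
          by (rule member_le_sum[OF b]) auto
        thus "(norm (app Y b))\<^sup>2 \<le> HS Z" using \<open>Y \<in> S\<close> by (simp add: S_def)
      qed
      hence "(\<Sum>b\<in>Basis. norm (app Y b)) \<le> (\<Sum>b\<in>(Basis::'a set). sqrt (HS Z))" by (rule sum_mono)
      thus ?thesis using norm_endo_le[of Y] by simp
    qed
    thus ?thesis by (auto simp: bounded_iff)
  qed
  ultimately have cS: "compact S" by (simp add: compact_eq_bounded_closed)
  have "Z \<in> S" using Z by (simp add: S_def c0_def)
  then obtain m where m: "m \<in> S" "\<And>Y. Y \<in> S \<Longrightarrow> HS m \<le> HS Y"
  proof -
    have "continuous_on S HS" using continuous_on_subset[OF HS_cont] by blast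
    moreover have "S \<noteq> {}" using \<open>Z \<in> S\<close> by blast
    ultimately show ?thesis using continuous_attains_inf[OF cS] that by blast
  qed
  have mL: "m \<in> lie" and mc: "v \<bullet> app m p = c0" and mZ: "HS m \<le> HS Z" using m(1) by (auto simp: S_def)
  have mmin: "HS m \<le> HS Y" if "Y \<in> lie" "v \<bullet> app Y p = c0" for Y
  proof (cases "HS Y \<le> HS Z")
    case True thus ?thesis using m(2) that by (simp add: S_def)
  next
    case False thus ?thesis using mZ by simp
  qed
  have comm: "h * m = m * h" if h: "h \<in> Hs" for h
  proof -
    have hK: "h \<in> K" using h Hs(1) by auto
    obtain h' where h': "h' \<in> K" "h * h' = 1" "h' * h = 1" "app h' p = p"
      using inv_K[OF hK Hs(2)[OF h]] by blast
    define m' where "m' = h * m * h'"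
    have m'L: "m' \<in> lie" unfolding m'_def by (rule lie_conj[OF mL hK h'(1-3)])
    have m'c: "v \<bullet> app m' p = c0"
    proof -
      have "v \<bullet> app m' p = app h v \<bullet> app h (app m p)"
        using Hs(3)[OF h] h'(4) by (simp add: m'_def app_mult)
      also have "\<dots> = v \<bullet> app m p" by (rule orth[OF hK])
      finally show ?thesis using mc by simp
    qed
    have m'H: "HS m' = HS m" unfolding m'_def by (rule HS_conj[OF hK h'(2)])
    have "m' = m"
    proof (rule ccontr)
      assume ne: "m' \<noteq> m"
      define mid where "mid = (1/2) *\<^sub>R (m + m')"
      have "mid \<in> lie" unfolding mid_def by (intro lie_scale lie_add mL m'L)
      moreover have "v \<bullet> app mid p = c0"
        using mc m'c by (simp add: mid_def app.scaleR_left app.add_left inner_add_right)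
      ultimately have "HS m \<le> HS mid" by (rule mmin)
      moreover have "HS mid = HS m - HS (m - m') / 4"
        using m'H by (simp add: mid_def HS_parallelogram)
      moreover have "HS (m - m') > 0" using ne by (intro HS_pos) auto
      ultimately show False by simp
    qed
    hence "h * m * h' * h = m * h" by (simp add: m'_def)
    thus ?thesis using h'(3) by (simp add: mult.assoc)
  qed
  show ?thesis using mL comm mc by (auto simp: c0_def)
qed

end


lemma dq_lim:
  assumes "(c has_vector_derivative w) (at (0::real))"
  shows "((\<lambda>t. (c t - c 0) /\<^sub>R t) \<longlongrightarrow> w) (at 0)"
proof -
  have "((\<lambda>y. ((c y - c 0) - (y - 0) *\<^sub>R w) /\<^sub>R norm (y - 0)) \<longlongrightarrow> 0) (at 0)"
    using assms unfolding has_vector_derivative_def has_derivative_at_within by blast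
  hence h: "((\<lambda>y. norm (((c y - c 0) - y *\<^sub>R w) /\<^sub>R norm y)) \<longlongrightarrow> 0) (at 0)"
    using tendsto_norm_zero by fastforce
  have "((\<lambda>t. (c t - c 0) /\<^sub>R t - w) \<longlongrightarrow> 0) (at 0)"
  proof (rule Lim_null_comparison[OF _ h])
    show "\<forall>\<^sub>F t in at 0. norm ((c t - c 0) /\<^sub>R t - w) \<le> norm (((c t - c 0) - t *\<^sub>R w) /\<^sub>R norm t)"
    proof (rule eventually_at_filter[THEN iffD2], intro always_eventually allI impI)
      fix t :: real assume "t \<noteq> 0"
      hence "(c t - c 0) /\<^sub>R t - w = ((c t - c 0) - t *\<^sub>R w) /\<^sub>R t" by (simp add: scaleR_diff_right)
      thus "norm ((c t - c 0) /\<^sub>R t - w) \<le> norm (((c t - c 0) - t *\<^sub>R w) /\<^sub>R norm t)" by simp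
    qed
  qed
  thus ?thesis by (simp add: LIM_zero_iff)
qed

lemma cont_endo_iff: "continuous_on S f \<longleftrightarrow> continuous_on S (\<lambda>x. Rep_endo (f x))"
  by (simp add: continuous_on_def tendsto_Rep_iff)

lemma cont_blinfun_gen:
  fixes f :: "'d::topological_space \<Rightarrow> 'e::euclidean_space \<Rightarrow>\<^sub>L 'f::real_normed_vector"
  assumes "\<And>i. i \<in> Basis \<Longrightarrow> continuous_on s (\<lambda>x. f x i)"
  shows "continuous_on s f"
  unfolding continuous_on_def
proof
  fix x assume "x \<in> s"
  show "(f \<longlongrightarrow> f x) (at x within s)"
    by (rule tendsto_componentwise1) (use assms \<open>x \<in> s\<close> in \<open>auto simp: continuous_on_def\<close>)
qed


theorem lemma3p4:
  fixes G :: "('g::topological_space, 'b) monoid_scheme"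
    and \<rho> :: "'g \<Rightarrow> 'v::euclidean_space \<Rightarrow> 'v"
    and H :: "'g set" and p :: 'v
  assumes grp: "group G"
    and cpt: "compact (carrier G)"
    and mult_cont: "continuous_on (carrier G \<times> carrier G) (\<lambda>(g, h). g \<otimes>\<^bsub>G\<^esub> h)"
    and inv_cont: "continuous_on (carrier G) (\<lambda>g. inv\<^bsub>G\<^esub> g)"
    and orth: "\<forall>g\<in>carrier G. orthogonal_transformation (\<rho> g)"
    and hom: "\<forall>g\<in>carrier G. \<forall>h\<in>carrier G. \<rho> (g \<otimes>\<^bsub>G\<^esub> h) = \<rho> g \<circ> \<rho> h"
    and act_cont: "continuous_on (carrier G \<times> UNIV) (\<lambda>(g, v). \<rho> g v)"
    and princ: "principal_isotropy_subgroup G \<rho> H"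
    and p: "p \<in> fixed_subspace \<rho> H"
  shows "orthogonal_comp (tangent_space (orbit (G\<lparr>carrier := normalizer G H\<rparr>) \<rho> p) p)
           \<inter> fixed_subspace \<rho> H
         = orthogonal_comp (tangent_space (orbit G \<rho> p) p) \<inter> fixed_subspace \<rho> H"
proof -
  interpret G: group G by (rule grp)
  obtain x where Hx: "H = stabilizer G \<rho> x" using princ unfolding principal_isotropy_subgroup_def by blast
  have Hc: "H \<subseteq> carrier G" by (auto simp: Hx stabilizer_def)
  have Hfix: "\<And>h. h \<in> H \<Longrightarrow> \<rho> h x = x" by (auto simp: Hx stabilizer_def)
  have lin: "\<And>g. g \<in> carrier G \<Longrightarrow> linear (\<rho> g)" using orth by (auto simp: orthogonal_transformation_def)
  define R where "R g = mk (\<rho> g)" for g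
  have appR: "\<And>g. g \<in> carrier G \<Longrightarrow> app (R g) = \<rho> g" by (simp add: R_def app_mk lin)
  have Rmult: "\<And>g h. g \<in> carrier G \<Longrightarrow> h \<in> carrier G \<Longrightarrow> R (g \<otimes>\<^bsub>G\<^esub> h) = R g * R h"
    by (rule endo_eqI) (simp add: appR app_mult hom)
  have rho1: "\<rho> \<one>\<^bsub>G\<^esub> v = v" for v
  proof -
    have "inj (\<rho> \<one>\<^bsub>G\<^esub>)" using orth orthogonal_transformation_inj by blast
    moreover have "\<rho> \<one>\<^bsub>G\<^esub> (\<rho> \<one>\<^bsub>G\<^esub> v) = \<rho> \<one>\<^bsub>G\<^esub> v"
      using hom by (metis G.one_closed G.l_one comp_apply)
    ultimately show ?thesis by (meson injD)
  qed
  have R1: "R \<one>\<^bsub>G\<^esub> = 1" by (rule endo_eqI) (simp add: appR rho1)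
  have Rinv: "\<And>g. g \<in> carrier G \<Longrightarrow> R g * R (inv\<^bsub>G\<^esub> g) = 1 \<and> R (inv\<^bsub>G\<^esub> g) * R g = 1"
    by (metis Rmult G.inv_closed G.r_inv G.l_inv R1)
  define K where "K = R ` carrier G"
  have contR: "continuous_on (carrier G) R"
    unfolding cont_endo_iff
  proof (rule cont_blinfun_gen)
    fix i :: 'v
    have "continuous_on (carrier G) (\<lambda>g. (\<lambda>(g, v). \<rho> g v) (g, i))"
      by (rule continuous_on_compose2[OF act_cont]) (auto intro!: continuous_intros)
    moreover have "\<And>g. g \<in> carrier G \<Longrightarrow> (\<lambda>(g, v). \<rho> g v) (g, i) = blinfun_apply (Rep_endo (R g)) i"
      by (simp add: app_def[symmetric] appR)
    ultimately show "continuous_on (carrier G) (\<lambda>g. blinfun_apply (Rep_endo (R g)) i)"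
      using continuous_on_cong by force
  qed
  have cg: "cgrp K"
  proof
    show "compact K" unfolding K_def by (rule compact_continuous_image[OF contR cpt])
    show "1 \<in> K" unfolding K_def using R1 G.one_closed by force
    fix a b assume "a \<in> K" "b \<in> K"
    then obtain g h where "g \<in> carrier G" "h \<in> carrier G" "a = R g" "b = R h" by (auto simp: K_def)
    thus "a * b \<in> K" unfolding K_def using Rmult G.m_closed by (metis image_eqI)
  next
    fix a assume "a \<in> K"
    then obtain g where "g \<in> carrier G" "a = R g" by (auto simp: K_def)
    thus "\<exists>b\<in>K. a * b = 1 \<and> b * a = 1" unfolding K_def using Rinv G.inv_closed by blast
  next
    fix a u w assume "a \<in> K"
    then obtain g where "g \<in> carrier G" "a = R g" by (auto simp: K_def)
    thus "app a u \<bullet> app a w = u \<bullet> w" using orth by (simp add: appR orthogonal_transformation_def)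
  qed
  interpret cgrp K by (rule cg)
  have Hp: "\<And>h. h \<in> H \<Longrightarrow> \<rho> h p = p" using p by (simp add: fixed_subspace_def)
  have conj_in: "a \<otimes>\<^bsub>G\<^esub> h \<otimes>\<^bsub>G\<^esub> inv\<^bsub>G\<^esub> a \<in> H"
    if a: "a \<in> carrier G" and ca: "\<forall>h\<in>H. R a * R h = R h * R a" and h: "h \<in> H" for a h
  proof -
    have hc: "h \<in> carrier G" using h Hc by auto
    have "R (a \<otimes>\<^bsub>G\<^esub> h \<otimes>\<^bsub>G\<^esub> inv\<^bsub>G\<^esub> a) = R a * R h * R (inv\<^bsub>G\<^esub> a)"
      using a hc by (simp add: Rmult)
    also have "\<dots> = R h * (R a * R (inv\<^bsub>G\<^esub> a))" using ca h by (simp add: mult.assoc)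
    also have "\<dots> = R h" using Rinv[OF a] by simp
    finally have "\<rho> (a \<otimes>\<^bsub>G\<^esub> h \<otimes>\<^bsub>G\<^esub> inv\<^bsub>G\<^esub> a) x = \<rho> h x"
      using a hc by (metis appR G.m_closed G.inv_closed)
    thus ?thesis using Hfix[OF h] a hc by (simp add: Hx stabilizer_def)
  qed
  have norm_crit: "g \<in> normalizer G H" if g: "g \<in> carrier G" and cg: "\<forall>h\<in>H. R g * R h = R h * R g" for g
  proof -
    have gi: "inv\<^bsub>G\<^esub> g \<in> carrier G" using g by simp
    have cgi: "\<forall>h\<in>H. R (inv\<^bsub>G\<^esub> g) * R h = R h * R (inv\<^bsub>G\<^esub> g)"
    proof
      fix h assume "h \<in> H"
      have "R (inv\<^bsub>G\<^esub> g) * R h = R (inv\<^bsub>G\<^esub> g) * R h * (R g * R (inv\<^bsub>G\<^esub> g))" using Rinv[OF g] by simp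
      also have "\<dots> = R (inv\<^bsub>G\<^esub> g) * (R g * R h) * R (inv\<^bsub>G\<^esub> g)"
        using cg \<open>h \<in> H\<close> by (simp add: mult.assoc)
      also have "\<dots> = R h * R (inv\<^bsub>G\<^esub> g)" using Rinv[OF g] by (simp add: mult.assoc[symmetric])
      finally show "R (inv\<^bsub>G\<^esub> g) * R h = R h * R (inv\<^bsub>G\<^esub> g)" .
    qed
    have eq: "g <#\<^bsub>G\<^esub> H #>\<^bsub>G\<^esub> inv\<^bsub>G\<^esub> g = H"
    proof
      show "g <#\<^bsub>G\<^esub> H #>\<^bsub>G\<^esub> inv\<^bsub>G\<^esub> g \<subseteq> H"
        using conj_in[OF g cg] by (auto simp: l_coset_def r_coset_def)
    next
      show "H \<subseteq> g <#\<^bsub>G\<^esub> H #>\<^bsub>G\<^esub> inv\<^bsub>G\<^esub> g"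
      proof
        fix h assume h: "h \<in> H"
        hence hc: "h \<in> carrier G" using Hc by auto
        have h': "inv\<^bsub>G\<^esub> g \<otimes>\<^bsub>G\<^esub> h \<otimes>\<^bsub>G\<^esub> inv\<^bsub>G\<^esub> (inv\<^bsub>G\<^esub> g) \<in> H"
          by (rule conj_in[OF gi cgi h])
        have "h = g \<otimes>\<^bsub>G\<^esub> (inv\<^bsub>G\<^esub> g \<otimes>\<^bsub>G\<^esub> h \<otimes>\<^bsub>G\<^esub> inv\<^bsub>G\<^esub> (inv\<^bsub>G\<^esub> g)) \<otimes>\<^bsub>G\<^esub> inv\<^bsub>G\<^esub> g"
          using g hc by (simp add: G.m_assoc[symmetric]) (simp add: G.m_assoc)
        thus "h \<in> g <#\<^bsub>G\<^esub> H #>\<^bsub>G\<^esub> inv\<^bsub>G\<^esub> g"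
          using h' unfolding l_coset_def r_coset_def by blast
      qed
    qed
    show ?thesis using g eq Hc by (simp add: normalizer_def stabilizer_def)
  qed
  have TN_sub: "tangent_space (orbit (G\<lparr>carrier := normalizer G H\<rparr>) \<rho> p) p \<subseteq> tangent_space (orbit G \<rho> p) p"
  proof -
    have "normalizer G H \<subseteq> carrier G" by (auto simp: normalizer_def stabilizer_def)
    hence "orbit (G\<lparr>carrier := normalizer G H\<rparr>) \<rho> p \<subseteq> orbit G \<rho> p" by (auto simp: orbit_def)
    thus ?thesis unfolding tangent_space_def by (auto elim!: eventually_mono)
  qed
  show ?thesis
  proof (rule equalityI)
    show "orthogonal_comp (tangent_space (orbit G \<rho> p) p) \<inter> fixed_subspace \<rho> H
       \<subseteq> orthogonal_comp (tangent_space (orbit (G\<lparr>carrier := normalizer G H\<rparr>) \<rho> p) p) \<inter> fixed_subspace \<rho> H"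
      using orthogonal_comp_anti_mono[OF TN_sub] by blast
  next
    show "orthogonal_comp (tangent_space (orbit (G\<lparr>carrier := normalizer G H\<rparr>) \<rho> p) p) \<inter> fixed_subspace \<rho> H
       \<subseteq> orthogonal_comp (tangent_space (orbit G \<rho> p) p) \<inter> fixed_subspace \<rho> H"
    proof
      fix v assume v: "v \<in> orthogonal_comp (tangent_space (orbit (G\<lparr>carrier := normalizer G H\<rparr>) \<rho> p) p) \<inter> fixed_subspace \<rho> H"
      have vH: "\<And>h. h \<in> H \<Longrightarrow> \<rho> h v = v" using v by (simp add: fixed_subspace_def)
      have "v \<in> orthogonal_comp (tangent_space (orbit G \<rho> p) p)"
        unfolding orthogonal_comp_def orthogonal_def
      proof (intro CollectI ballI)
        fix w assume "w \<in> tangent_space (orbit G \<rho> p) p"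
        then obtain c where c0: "c 0 = p" and cev: "\<forall>\<^sub>F t in at 0. c t \<in> orbit G \<rho> p"
            and cd: "(c has_vector_derivative w) (at 0)" by (auto simp: tangent_space_def)
        from cev obtain d where d: "d > 0" and dc: "\<And>t. t \<noteq> 0 \<Longrightarrow> dist t 0 < d \<Longrightarrow> c t \<in> orbit G \<rho> p"
          unfolding eventually_at by auto
        define tt where "tt n = d * inverse (real (Suc (Suc n)))" for n
        have ttp: "tt n > 0" for n using d by (simp add: tt_def)
        have ttd: "tt n < d" for n
        proof -
          have "inverse (real (Suc (Suc n))) < 1" by (simp add: inverse_less_1_iff)
          thus ?thesis using d by (simp add: tt_def)
        qed
        have tt0: "tt \<longlonglongrightarrow> 0"
        proof -
          have "(\<lambda>n. inverse (real (Suc (Suc n)))) \<longlonglongrightarrow> 0"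
            using LIMSEQ_Suc[OF LIMSEQ_inverse_real_of_nat] by simp
          hence "(\<lambda>n. d * inverse (real (Suc (Suc n)))) \<longlonglongrightarrow> d * 0" by (intro tendsto_mult tendsto_const)
          thus ?thesis by (simp add: tt_def[abs_def])
        qed
        define q where "q n = c (tt n)" for n
        have qK: "\<exists>k\<in>K. app k p = q n" for n
        proof -
          have "c (tt n) \<in> orbit G \<rho> p" using ttp[of n] ttd[of n] by (intro dc) auto
          then obtain g where "g \<in> carrier G" "c (tt n) = \<rho> g p" by (auto simp: orbit_def)
          thus ?thesis by (auto simp: K_def q_def appR)
        qed
        have D: "(\<lambda>n. (q n - p) /\<^sub>R tt n) \<longlonglongrightarrow> w"
        proof -
          have "filterlim tt (at 0) sequentially"
            using tt0 ttp by (auto simp: filterlim_at intro!: always_eventually) (metis less_irrefl)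
          from filterlim_compose[OF dq_lim[OF cd] this]
          show ?thesis by (simp add: q_def c0 o_def)
        qed
        obtain Z where Z: "Z \<in> lie" "app Z p = w"
          using tangent_in_lie[OF qK ttp tt0 D] by blast
        have Hs: "R ` H \<subseteq> K" using Hc by (auto simp: K_def)
        obtain Y where Y: "Y \<in> lie" "\<forall>h\<in>R ` H. h * Y = Y * h" "v \<bullet> app Y p = v \<bullet> app Z p"
        proof -
          have a2: "\<And>h. h \<in> R ` H \<Longrightarrow> app h p = p" using Hc Hp by (auto simp: appR)
          have a3: "\<And>h. h \<in> R ` H \<Longrightarrow> app h v = v" using Hc vH by (auto simp: appR)
          show ?thesis using avg[OF Hs a2 a3 Z(1)] that by blast
        qed
        have "app Y p \<in> tangent_space (orbit (G\<lparr>carrier := normalizer G H\<rparr>) \<rho> p) p"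
          unfolding tangent_space_def
        proof (intro CollectI exI conjI)
          show "app (exp (0 *\<^sub>R Y)) p = p" by simp
          show "((\<lambda>t. app (exp (t *\<^sub>R Y)) p) has_vector_derivative app Y p) (at 0)"
            by (rule bounded_linear.has_vector_derivative[OF app.bounded_linear_left exp_deriv0])
          show "\<forall>\<^sub>F t in at 0. app (exp (t *\<^sub>R Y)) p \<in> orbit (G\<lparr>carrier := normalizer G H\<rparr>) \<rho> p"
          proof (intro always_eventually allI)
            fix t :: real
            obtain g where g: "g \<in> carrier G" "exp (t *\<^sub>R Y) = R g"
              using exp_in[OF Y(1), of t] by (auto simp: K_def)
            have "\<forall>h\<in>H. R g * R h = R h * R g"
            proof
              fix h assume "h \<in> H"
              hence hK: "R h \<in> K" and hY: "R h * Y = Y * R h" using Hc Y(2) by (auto simp: K_def)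
              obtain h' where h': "h' \<in> K" "R h * h' = 1" "h' * R h = 1" using inv_ex[OF hK] by blast
              have eqY: "R h * (t *\<^sub>R Y) * h' = t *\<^sub>R Y"
                using hY h'(2) by (simp add: mult.assoc)
              have c1: "exp (R h * (t *\<^sub>R Y) * h') = R h * exp (t *\<^sub>R Y) * h'"
                by (rule exp_conj[OF h'(2,3)])
              hence "R h * exp (t *\<^sub>R Y) * h' = exp (t *\<^sub>R Y)" unfolding eqY by (rule sym)
              hence "R h * exp (t *\<^sub>R Y) * h' * R h = exp (t *\<^sub>R Y) * R h" by simp
              hence "R h * exp (t *\<^sub>R Y) = exp (t *\<^sub>R Y) * R h" using h'(3) by (simp add: mult.assoc)
              thus "R g * R h = R h * R g" using g(2) by simp
            qed
            hence "g \<in> normalizer G H" by (rule norm_crit[OF g(1)])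
            moreover have "app (exp (t *\<^sub>R Y)) p = \<rho> g p" using g by (simp add: appR)
            ultimately show "app (exp (t *\<^sub>R Y)) p \<in> orbit (G\<lparr>carrier := normalizer G H\<rparr>) \<rho> p"
              by (auto simp: orbit_def)
          qed
        qed
        hence "app Y p \<bullet> v = 0" using v by (auto simp: orthogonal_comp_def orthogonal_def)
        thus "w \<bullet> v = 0" using Y(3) Z(2) by (simp add: inner_commute)
      qed
      thus "v \<in> orthogonal_comp (tangent_space (orbit G \<rho> p) p) \<inter> fixed_subspace \<rho> H" using v by blast
    qed
  qed
qed


end
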